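(* Assume $\lambda_1<\lambda_2$ and $\lambda_1<\lambda_3$, fix $a,b>0$ and $\Delta>0$ large enough that the contour $L$ and the function $\varphi$ below are defined, and let $E_1=\{y\in\mathbb Z^2: y_2>0,y_3>0\}$. Then: (1) for every $y\in E_1$, $\sum_{z\ne y}s_{yz}(\varphi(z)-\varphi(y))=\langle (u_2^{-1},u_3^{-1}),M_F\rangle$ with $M_F=(\lambda_2-\lambda_1,\lambda_3-\lambda_1)$, in particular it does not depend on $y$; (2) there exist constants $C,\gamma>0$ such that $\sum_{z\ne y}r_{yz}(\varphi(z)-\varphi(y))\le-\gamma\,\varphi(y)$ for all $y\in E_1$ with $\varphi(y)>C$.
   Context: Markov chain $Y(n)=(y_2,y_3)\in\mathbb Z^2$ (relative coordinates of the 3-processor cascade model, time normalized so that $\lambda_1+\lambda_2+\lambda_3+\beta_{12}+\beta_{23}=1$, all parameters positive), with transition probabilities $p_{yz}=s_{yz}+r_{yz}$ for $z\ne y$. Free part: $s_{y,y+(1,0)}=\lambda_2$, $s_{y,y+(0,1)}=\lambda_3$, $s_{y,y-(1,1)}=\lambda_1$, others $0$. Rollback part ($b_2=\lambda_2/(\lambda_2+\beta_{23})$): if $y_2>0,y_3\le0$: $r_{y,(0,y_3)}=\beta_{12}$; if $y_2<y_3$: $\beta_{23}$ is added to $r_{y,(y_2,y_2)}$; if $0<y_3\le y_2$: $\beta_{12}(1-b_2)^{z_3}b_2$ is added to $r_{y,(0,z_3)}$ for $0\le z_3<y_3$ and $\beta_{12}(1-b_2)^{y_3}$ to $r_{y,(0,y_3)}$;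 if $0<y_2<y_3$: $\beta_{12}(1-b_2)^{z_3}b_2$ is added to $r_{y,(0,z_3)}$ for $0\le z_3\le y_2$ and $\beta_{12}(1-b_2)^{y_2+1}$ to $r_{y,(0,y_3)}$. Contour $L$: with $e(y)=ay_2^2+b(y_2-y_3)^2$, let $T_3$, $T_2$ be the points of the ellipse $\{e=1\}$ where the outer normal has direction $(-\Delta,1)$, resp. $(1,-\Delta)$; $K_3=(0,u_3)$ is where the tangent at $T_3$ meets the $y_3$-axis and $K_2=(u_2,0)$ where the tangent at $T_2$ meets the $y_2$-axis ($u_2,u_3>0$). $L$ consists of segment $K_3K_2$, segment $K_2T_2$, the ellipse arc $T_2T_3$ through $(-a^{-1/2},-a^{-1/2})$, and segment $T_3K_3$; each open ray from $0$ meets $L$ once. $\varphi(0)=0$ and for $y\ne0$, $\varphi(y)>0$ is the unique number with $y/\varphi(y)\in L$ (so $\varphi(y)=y_2/u_2+y_3/u_3$ on the closed positive quadrant). *)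

theory Defs
  imports "HOL-Analysis.Analysis"
begin

(* Points of Z^2 are pairs (y2, y3) :: int \<times> int; fst = y_2, snd = y_3. *)

type_synonym pt = "int \<times> int"

definition rpt :: "pt \<Rightarrow> real \<times> real" where
  "rpt y = (real_of_int (fst y), real_of_int (snd y))"

definition s_free :: "real \<Rightarrow> real \<Rightarrow> real \<Rightarrow> pt \<Rightarrow> pt \<Rightarrow> real" where
  "s_free l1 l2 l3 y z =
     (if z = (fst y + 1, snd y) then l2 else 0)
   + (if z = (fst y, snd y + 1) then l3 else 0)
   + (if z = (fst y - 1, snd y - 1) then l1 else 0)"

definition r_roll :: "real \<Rightarrow> real \<Rightarrow> real \<Rightarrow> pt \<Rightarrow> pt \<Rightarrow> real" where
  "r_roll l2 b12 b23 y z =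
    (let y2 = fst y; y3 = snd y; z2 = fst z; z3 = snd z; b2 = l2 / (l2 + b23) in
       (if y2 > 0 \<and> y3 \<le> 0 \<and> z = (0, y3) then b12 else 0)
     + (if y2 < y3 \<and> z = (y2, y2) then b23 else 0)
     + (if 0 < y3 \<and> y3 \<le> y2 \<and> z2 = 0 \<and> 0 \<le> z3 \<and> z3 < y3
          then b12 * (1 - b2) ^ nat z3 * b2 else 0)
     + (if 0 < y3 \<and> y3 \<le> y2 \<and> z = (0, y3) then b12 * (1 - b2) ^ nat y3 else 0)
     + (if 0 < y2 \<and> y2 < y3 \<and> z2 = 0 \<and> 0 \<le> z3 \<and> z3 \<le> y2
          then b12 * (1 - b2) ^ nat z3 * b2 else 0)
     + (if 0 < y2 \<and> y2 < y3 \<and> z = (0, y3) then b12 * (1 - b2) ^ nat (y2 + 1) else 0))"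

definition ell :: "real \<Rightarrow> real \<Rightarrow> real \<times> real \<Rightarrow> real" where
  "ell a b p = a * (fst p)^2 + b * (fst p - snd p)^2"

definition ell_grad :: "real \<Rightarrow> real \<Rightarrow> real \<times> real \<Rightarrow> real \<times> real" where
  "ell_grad a b p = (2 * a * fst p + 2 * b * (fst p - snd p), - 2 * b * (fst p - snd p))"

definition normal_pt :: "real \<Rightarrow> real \<Rightarrow> real \<times> real \<Rightarrow> real \<times> real \<Rightarrow> bool" where
  "normal_pt a b v p \<longleftrightarrow> ell a b p = 1 \<and> (\<exists>c>0. ell_grad a b p = c *\<^sub>R v)"

definition T3 :: "real \<Rightarrow> real \<Rightarrow> real \<Rightarrow> real \<times> real" where
  "T3 a b D = (THE p. normal_pt a b (-D, 1) p)"

definition T2 :: "real \<Rightarrow> real \<Rightarrow> real \<Rightarrow> real \<times> real" where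
  "T2 a b D = (THE p. normal_pt a b (1, -D) p)"

definition tangent :: "real \<Rightarrow> real \<Rightarrow> real \<times> real \<Rightarrow> (real \<times> real) set" where
  "tangent a b p = {q. ell_grad a b p \<bullet> (q - p) = 0}"

definition K3 :: "real \<Rightarrow> real \<Rightarrow> real \<Rightarrow> real \<times> real" where
  "K3 a b D = (THE q. fst q = 0 \<and> q \<in> tangent a b (T3 a b D))"

definition K2 :: "real \<Rightarrow> real \<Rightarrow> real \<Rightarrow> real \<times> real" where
  "K2 a b D = (THE q. snd q = 0 \<and> q \<in> tangent a b (T2 a b D))"

definition u3 :: "real \<Rightarrow> real \<Rightarrow> real \<Rightarrow> real" where
  "u3 a b D = snd (K3 a b D)"

definition u2 :: "real \<Rightarrow> real \<Rightarrow> real \<Rightarrow> real" where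
  "u2 a b D = fst (K2 a b D)"

definition Pm :: "real \<Rightarrow> real \<times> real" where
  "Pm a = (- 1 / sqrt a, - 1 / sqrt a)"

definition ell_arc :: "real \<Rightarrow> real \<Rightarrow> real \<Rightarrow> (real \<times> real) set" where
  "ell_arc a b D =
     connected_component_set ({p. ell a b p = 1} - {T2 a b D, T3 a b D}) (Pm a)
     \<union> {T2 a b D, T3 a b D}"

definition contourL :: "real \<Rightarrow> real \<Rightarrow> real \<Rightarrow> (real \<times> real) set" where
  "contourL a b D =
     closed_segment (K3 a b D) (K2 a b D) \<union> closed_segment (K2 a b D) (T2 a b D)
     \<union> ell_arc a b D \<union> closed_segment (T3 a b D) (K3 a b D)"

definition phiL :: "real \<Rightarrow> real \<Rightarrow> real \<Rightarrow> real \<times> real \<Rightarrow> real" where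
  "phiL a b D y = (if y = 0 then 0 else (THE t. t > 0 \<and> (1 / t) *\<^sub>R y \<in> contourL a b D))"

(* "Delta is large enough that L and phi are defined" *)
definition contour_defined :: "real \<Rightarrow> real \<Rightarrow> real \<Rightarrow> bool" where
  "contour_defined a b D \<longleftrightarrow>
     (\<exists>!p. normal_pt a b (-D, 1) p) \<and> (\<exists>!p. normal_pt a b (1, -D) p)
   \<and> (\<exists>!q. fst q = 0 \<and> q \<in> tangent a b (T3 a b D))
   \<and> (\<exists>!q. snd q = 0 \<and> q \<in> tangent a b (T2 a b D))
   \<and> u2 a b D > 0 \<and> u3 a b D > 0
   \<and> T2 a b D \<noteq> T3 a b D \<and> Pm a \<notin> {T2 a b D, T3 a b D}
   \<and> (\<forall>y::real \<times> real. y \<noteq> 0 \<longrightarrow> (\<exists>!t. t > 0 \<and> (1 / t) *\<^sub>R y \<in> contourL a b D))"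

end

theory Submission
  imports Defs
begin

lemma infsum_supp:
  fixes f :: "'a \<Rightarrow> real"
  assumes "finite S" "S \<subseteq> A" "\<And>x. x \<in> A - S \<Longrightarrow> f x = 0"
  shows "infsum f A = sum f S"
proof -
  have "infsum f A = infsum f S"
    by (rule infsum_cong_neutral) (use assms in auto)
  then show ?thesis using assms(1) by simp
qed

lemma phi_lin:
  assumes cd: "contour_defined a b D" and x: "x \<ge> 0" and y: "y \<ge> 0"
  shows "phiL a b D (x, y) = x / u2 a b D + y / u3 a b D"
proof -
  let ?u2 = "u2 a b D" and ?u3 = "u3 a b D"
  have u2: "?u2 > 0" and u3: "?u3 > 0" using cd unfolding contour_defined_def by auto
  have e3: "\<exists>!q. fst q = 0 \<and> q \<in> tangent a b (T3 a b D)"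
   and e2: "\<exists>!q. snd q = 0 \<and> q \<in> tangent a b (T2 a b D)"
   and eu: "\<forall>y::real \<times> real. y \<noteq> 0 \<longrightarrow> (\<exists>!t. t > 0 \<and> (1 / t) *\<^sub>R y \<in> contourL a b D)"
    using cd unfolding contour_defined_def by auto
  have "fst (K3 a b D) = 0" using theI'[OF e3] unfolding K3_def by blast
  hence K3: "K3 a b D = (0, ?u3)" by (simp add: u3_def prod_eq_iff)
  have "snd (K2 a b D) = 0" using theI'[OF e2] unfolding K2_def by blast
  hence K2: "K2 a b D = (?u2, 0)" by (simp add: u2_def prod_eq_iff)
  show ?thesis
  proof (cases "(x, y) = 0")
    case True
    then show ?thesis by (simp add: phiL_def zero_prod_def)
  next
    case False
    define t where "t = x / ?u2 + y / ?u3"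
    have xy: "x > 0 \<or> y > 0" using False x y by (auto simp: zero_prod_def)
    have tpos: "t > 0" unfolding t_def using xy x y u2 u3
      by (smt (verit) divide_nonneg_pos divide_pos_pos)
    define u where "u = (x / ?u2) / t"
    have u01: "0 \<le> u \<and> u \<le> 1" unfolding u_def using tpos x y u2 u3
      by (auto simp: t_def divide_simps)
    have "(1 / t) *\<^sub>R (x, y) = (1 - u) *\<^sub>R K3 a b D + u *\<^sub>R K2 a b D"
      unfolding K3 K2 using tpos u2 u3
      by (simp add: u_def t_def field_simps)
    hence "(1 / t) *\<^sub>R (x, y) \<in> closed_segment (K3 a b D) (K2 a b D)"
      unfolding closed_segment_def using u01 by blast
    hence mem: "(1 / t) *\<^sub>R (x, y) \<in> contourL a b D" unfolding contourL_def by blast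
    have "(THE t. t > 0 \<and> (1 / t) *\<^sub>R (x, y) \<in> contourL a b D) = t"
      by (rule the1_equality) (use eu False tpos mem in auto)
    then show ?thesis using False by (simp add: phiL_def t_def)
  qed
qed

lemma geo_id: "(\<Sum>k<n. (qq::real)^k * (1 - qq)) + qq^n = 1"
  by (induction n) (auto simp: algebra_simps)

lemma part1:
  assumes cd: "contour_defined a b D" and p: "p > 0" and q: "q > 0"
  shows "(\<Sum>\<^sub>\<infinity>z\<in>UNIV - {(p,q)}. s_free l1 l2 l3 (p,q) z * (phiL a b D (rpt z) - phiL a b D (rpt (p,q))))
           = (1 / u2 a b D, 1 / u3 a b D) \<bullet> (l2 - l1, l3 - l1)"
proof -
  let ?f = "\<lambda>z. s_free l1 l2 l3 (p,q) z * (phiL a b D (rpt z) - phiL a b D (rpt (p,q)))"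
  let ?S = "{(p+1,q),(p,q+1),(p-1,q-1)}"
  have "(\<Sum>\<^sub>\<infinity>z\<in>UNIV - {(p,q)}. ?f z) = sum ?f ?S"
    by (rule infsum_supp) (auto simp: s_free_def)
  also have "\<dots> = ?f (p+1,q) + ?f (p,q+1) + ?f (p-1,q-1)" by simp
  also have "\<dots> = (1 / u2 a b D, 1 / u3 a b D) \<bullet> (l2 - l1, l3 - l1)"
    using p q by (simp add: s_free_def rpt_def phi_lin[OF cd] inner_prod_def algebra_simps diff_divide_distrib add_divide_distrib)
  finally show ?thesis .
qed

lemma aux1: fixes x y m p :: real assumes "x>0" "y>0" shows "m*y/(x+y)*(p/x+p/y) = m*(p/x)"
proof -
  have "p/x+p/y = p*(x+y)/(x*y)" using assms by (simp add: field_simps)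
  hence "m*y/(x+y)*(p/x+p/y) = m*y/(x+y)*(p*(x+y)/(x*y))" by simp
  also have "\<dots> = m*p*(y*(x+y))/((x+y)*(x*y))" by (simp add: algebra_simps)
  also have "\<dots> = m*p/x" using assms by (simp add: divide_simps)
  finally show ?thesis by simp
qed

lemma aux2: fixes x y m :: real assumes "x>0" "y>0" "m \<ge> 0" shows "m*y/(x+y) \<le> m"
proof -
  have "y/(x+y) \<le> 1" using assms by simp
  hence "m*(y/(x+y)) \<le> m*1" using assms(3) by (rule mult_left_mono)
  thus ?thesis by simp
qed

lemma wsum:
  fixes qq bb b12 :: real
  assumes "bb = 1 - qq"
  shows "(\<Sum>k\<le>n. b12 * (if k < n then qq^k * bb else qq^n)) = b12"
proof -
  have "(\<Sum>k\<le>n. b12 * (if k < n then qq^k * bb else qq^n))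
      = (\<Sum>k<n. b12 * (qq^k * bb)) + b12 * qq^n"
    unfolding lessThan_Suc_atMost[symmetric]
    by (simp add: sum.lessThan_Suc)
  also have "\<dots> = b12 * ((\<Sum>k<n. qq^k * (1 - qq)) + qq^n)"
    by (simp add: assms sum_distrib_left algebra_simps)
  finally show ?thesis by (simp add: geo_id)
qed

lemma part2:
  assumes cd: "contour_defined a b D" and p: "p > 0" and q: "q > 0"
    and pos: "l2 > 0" "b12 > 0" "b23 > 0"
  shows "(\<Sum>\<^sub>\<infinity>z\<in>UNIV - {(p,q)}. r_roll l2 b12 b23 (p,q) z * (phiL a b D (rpt z) - phiL a b D (rpt (p,q))))
     \<le> - (min b12 b23 * u3 a b D / (u2 a b D + u3 a b D)) * phiL a b D (rpt (p,q))"
proof -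
  let ?u2 = "u2 a b D" and ?u3 = "u3 a b D"
  have u2: "?u2 > 0" and u3: "?u3 > 0" using cd unfolding contour_defined_def by auto
  define bb where "bb = l2 / (l2 + b23)"
  define qq where "qq = 1 - bb"
  have bb0: "bb \<ge> 0" and qq0: "qq \<ge> 0" using pos by (auto simp: bb_def qq_def field_simps)
  have bbq: "bb = 1 - qq" by (simp add: qq_def)
  let ?r = "r_roll l2 b12 b23 (p,q)"
  let ?f = "\<lambda>z. ?r z * (phiL a b D (rpt z) - phiL a b D (rpt (p,q)))"
  have phiy: "phiL a b D (rpt (p,q)) = p / ?u2 + q / ?u3"
    using p q by (simp add: rpt_def phi_lin[OF cd])
  define m0 where "m0 = min b12 b23"
  define \<gamma> where "\<gamma> = m0 * ?u3 / (?u2 + ?u3)"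
  have r0: "?r z \<ge> 0" for z using pos bb0 qq0
    by (simp add: r_roll_def Let_def bb_def[symmetric] qq_def[symmetric] bbq)
  show ?thesis
  proof (cases "q \<le> p")
    case True
    define n where "n = nat q"
    define g where "g = (\<lambda>k::nat. ((0::int), int k))"
    have gS: "g ` {..n} = {z. fst z = 0 \<and> 0 \<le> snd z \<and> snd z \<le> q}"
    proof (rule set_eqI, rule iffI)
      fix z assume "z \<in> g ` {..n}" thus "z \<in> {z. fst z = 0 \<and> 0 \<le> snd z \<and> snd z \<le> q}"
        using q by (auto simp: g_def n_def)
    next
      fix z :: pt assume "z \<in> {z. fst z = 0 \<and> 0 \<le> snd z \<and> snd z \<le> q}"
      hence "z = g (nat (snd z))" "nat (snd z) \<in> {..n}" by (auto simp: g_def n_def prod_eq_iff)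
      thus "z \<in> g ` {..n}" by blast
    qed
    have inj: "inj_on g {..n}" by (auto simp: g_def inj_on_def)
    have "(\<Sum>\<^sub>\<infinity>z\<in>UNIV - {(p,q)}. ?f z) = sum ?f (g ` {..n})"
    proof (rule infsum_supp)
      show "g ` {..n} \<subseteq> UNIV - {(p, q)}" using p by (auto simp: g_def)
      fix z assume "z \<in> UNIV - {(p, q)} - g ` {..n}"
      hence "\<not> (fst z = 0 \<and> 0 \<le> snd z \<and> snd z \<le> q)" using gS by blast
      thus "?f z = 0" using True q by (auto simp: r_roll_def Let_def)
    qed simp
    also have "\<dots> = (\<Sum>k\<le>n. ?f (g k))" by (simp add: sum.reindex[OF inj])
    also have "\<dots> \<le> (\<Sum>k\<le>n. b12 * (if k < n then qq^k * bb else qq^n) * (- (p / ?u2)))"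
    proof (rule sum_mono)
      fix k assume k: "k \<in> {..n}"
      have rk: "?r (g k) = b12 * (if k < n then qq^k * bb else qq^n)"
        using k True q p by (auto simp: r_roll_def Let_def g_def n_def bb_def[symmetric] qq_def[symmetric] bbq)
      have "real k \<le> q" using k q by (simp add: n_def)
      hence "real k / ?u3 \<le> q / ?u3" using u3 by (simp add: divide_right_mono)
      then have "phiL a b D (rpt (g k)) - phiL a b D (rpt (p,q)) \<le> - (p / ?u2)"
        unfolding phiy by (simp add: g_def rpt_def phi_lin[OF cd])
      then show "?f (g k) \<le> b12 * (if k < n then qq^k * bb else qq^n) * (- (p / ?u2))"
        unfolding rk[symmetric] using r0 by (rule mult_left_mono)
    qed
    also have "\<dots> = b12 * (- (p / ?u2))"
      unfolding sum_distrib_right[symmetric] using wsum[OF bbq, of b12 n] by simp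
    also have "\<dots> \<le> - \<gamma> * (p / ?u2 + q / ?u3)"
    proof -
      have "\<gamma> * (p / ?u2 + q / ?u3) \<le> \<gamma> * (p / ?u2 + p / ?u3)"
      proof (rule mult_left_mono)
        show "0 \<le> \<gamma>" using u2 u3 pos by (simp add: \<gamma>_def m0_def)
        have "real_of_int q / ?u3 \<le> p / ?u3" using True u3 by (simp add: divide_right_mono)
        thus "p / ?u2 + q / ?u3 \<le> p / ?u2 + p / ?u3" by simp
      qed
      also have "\<dots> = m0 * (p / ?u2)" using aux1[OF u2 u3] by (simp add: \<gamma>_def)
      also have "\<dots> \<le> b12 * (p / ?u2)" using p u2 by (intro mult_right_mono) (auto simp: m0_def)
      finally show ?thesis by simp
    qed
    finally show ?thesis by (simp add: phiy \<gamma>_def m0_def)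
  next
    case False
    define m where "m = nat p"
    define n where "n = Suc m"
    define g where "g = (\<lambda>k::nat. ((0::int), if k \<le> m then int k else q))"
    have gS: "{z. fst z = 0 \<and> ((0 \<le> snd z \<and> snd z \<le> p) \<or> snd z = q)} \<subseteq> g ` {..n}"
    proof
      fix z :: pt assume z: "z \<in> {z. fst z = 0 \<and> ((0 \<le> snd z \<and> snd z \<le> p) \<or> snd z = q)}"
      show "z \<in> g ` {..n}"
      proof (cases "snd z = q")
        case True
        hence "z = g n" using z by (auto simp: g_def n_def prod_eq_iff)
        thus ?thesis by auto
      next
        case F: False
        hence "z = g (nat (snd z))" "nat (snd z) \<in> {..n}" using z by (auto simp: g_def n_def m_def prod_eq_iff)
        thus ?thesis by blast
      qed
    qed
    have inj: "inj_on g {..n}" using False p by (auto simp: g_def inj_on_def m_def n_def)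
    have pp: "(p,p) \<notin> g ` {..n}" using p by (auto simp: g_def)
    have "(\<Sum>\<^sub>\<infinity>z\<in>UNIV - {(p,q)}. ?f z) = sum ?f (insert (p,p) (g ` {..n}))"
    proof (rule infsum_supp)
      show "insert (p,p) (g ` {..n}) \<subseteq> UNIV - {(p, q)}" using p False by (auto simp: g_def)
      fix z assume "z \<in> UNIV - {(p, q)} - insert (p,p) (g ` {..n})"
      hence "\<not> (fst z = 0 \<and> ((0 \<le> snd z \<and> snd z \<le> p) \<or> snd z = q))" "z \<noteq> (p,p)" using gS by blast+
      thus "?f z = 0" using False q by (auto simp: r_roll_def Let_def)
    qed simp
    also have "\<dots> = ?f (p,p) + (\<Sum>k\<le>n. ?f (g k))" using pp by (simp add: sum.reindex[OF inj])
    also have "\<dots> \<le> b23 * ((p - q) / ?u3) + (\<Sum>k\<le>n. b12 * (if k < n then qq^k * bb else qq^n) * (- (p / ?u2)))"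
    proof (rule add_mono)
      have "?r (p,p) = b23" using p False by (auto simp: r_roll_def Let_def)
      moreover have "phiL a b D (rpt (p,p)) - phiL a b D (rpt (p,q)) = (p - q) / ?u3"
        using p unfolding phiy by (simp add: rpt_def phi_lin[OF cd] diff_divide_distrib)
      ultimately show "?f (p,p) \<le> b23 * ((p - q) / ?u3)" by simp
      show "(\<Sum>k\<le>n. ?f (g k)) \<le> (\<Sum>k\<le>n. b12 * (if k < n then qq^k * bb else qq^n) * (- (p / ?u2)))"
      proof (rule sum_mono)
        fix k assume k: "k \<in> {..n}"
        have np: "nat (p+1) = Suc m" using p by (simp add: m_def)
        have rk: "?r (g k) = b12 * (if k < n then qq^k * bb else qq^n)"
          using k False q p np by (auto simp: r_roll_def Let_def g_def n_def m_def bb_def[symmetric] qq_def[symmetric] bbq)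
        have "snd (g k) \<le> q" "snd (g k) \<ge> 0" "fst (g k) = 0" using k False p by (auto simp: g_def m_def)
        hence "real_of_int (snd (g k)) / ?u3 \<le> q / ?u3" "phiL a b D (rpt (g k)) = real_of_int (snd (g k)) / ?u3"
          using u3 by (auto simp: divide_right_mono rpt_def phi_lin[OF cd] prod_eq_iff intro!: arg_cong[where f="phiL a b D"])
        then have "phiL a b D (rpt (g k)) - phiL a b D (rpt (p,q)) \<le> - (p / ?u2)"
          unfolding phiy by simp
        then show "?f (g k) \<le> b12 * (if k < n then qq^k * bb else qq^n) * (- (p / ?u2))"
          unfolding rk[symmetric] using r0 by (rule mult_left_mono)
      qed
    qed
    also have "\<dots> = b23 * ((p - q) / ?u3) + b12 * (- (p / ?u2))"
      unfolding sum_distrib_right[symmetric] using wsum[OF bbq, of b12 n] by simp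
    also have "\<dots> \<le> - \<gamma> * (p / ?u2 + q / ?u3)"
    proof -
      have g0: "\<gamma> \<ge> 0" using u2 u3 pos by (simp add: \<gamma>_def m0_def)
      have gm: "\<gamma> \<le> m0" unfolding \<gamma>_def using aux2[OF u2 u3, of m0] pos by (simp add: m0_def)
      have qp: "(q - p) / ?u3 \<ge> 0" using False u3 by simp
      have "\<gamma> * (p / ?u2 + q / ?u3) = \<gamma> * (p / ?u2 + p / ?u3) + \<gamma> * ((q - p) / ?u3)"
        by (simp add: algebra_simps diff_divide_distrib)
      also have "\<gamma> * (p / ?u2 + p / ?u3) = m0 * (p / ?u2)" using aux1[OF u2 u3] by (simp add: \<gamma>_def)
      also have "m0 * (p / ?u2) \<le> b12 * (p / ?u2)" using p u2 by (intro mult_right_mono) (auto simp: m0_def)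
      also have "\<gamma> * ((q - p) / ?u3) \<le> b23 * ((q - p) / ?u3)"
        using gm qp by (intro mult_right_mono) (auto simp: m0_def)
      finally have "\<gamma> * (p / ?u2 + q / ?u3) \<le> b12 * (p / ?u2) + b23 * ((q - p) / ?u3)" by simp
      thus ?thesis by (simp add: algebra_simps diff_divide_distrib)
    qed
    finally show ?thesis by (simp add: phiy \<gamma>_def m0_def)
  qed
qed

theorem lemma5:
  fixes l1 l2 l3 b12 b23 a b D :: real
  assumes "l1 > 0" "l2 > 0" "l3 > 0" "b12 > 0" "b23 > 0"
    and "l1 + l2 + l3 + b12 + b23 = 1"
    and "l1 < l2" "l1 < l3"
    and "a > 0" "b > 0" "D > 0"
    and "contour_defined a b D"
  shows "(\<forall>y::int \<times> int. fst y > 0 \<and> snd y > 0 \<longrightarrow>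
           (\<Sum>\<^sub>\<infinity>z\<in>UNIV - {y}. s_free l1 l2 l3 y z * (phiL a b D (rpt z) - phiL a b D (rpt y)))
           = (1 / u2 a b D, 1 / u3 a b D) \<bullet> (l2 - l1, l3 - l1))
         \<and> (\<exists>C \<gamma>. C > 0 \<and> \<gamma> > 0 \<and>
           (\<forall>y::int \<times> int. fst y > 0 \<and> snd y > 0 \<and> phiL a b D (rpt y) > C \<longrightarrow>
             (\<Sum>\<^sub>\<infinity>z\<in>UNIV - {y}. r_roll l2 b12 b23 y z * (phiL a b D (rpt z) - phiL a b D (rpt y)))
             \<le> - \<gamma> * phiL a b D (rpt y)))"
proof (intro conjI)
  show "\<forall>y::int \<times> int. fst y > 0 \<and> snd y > 0 \<longrightarrow>
           (\<Sum>\<^sub>\<infinity>z\<in>UNIV - {y}. s_free l1 l2 l3 y z * (phiL a b D (rpt z) - phiL a b D (rpt y)))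
           = (1 / u2 a b D, 1 / u3 a b D) \<bullet> (l2 - l1, l3 - l1)"
  proof (intro allI impI)
    fix y :: "int \<times> int" assume "fst y > 0 \<and> snd y > 0"
    then show "(\<Sum>\<^sub>\<infinity>z\<in>UNIV - {y}. s_free l1 l2 l3 y z * (phiL a b D (rpt z) - phiL a b D (rpt y)))
           = (1 / u2 a b D, 1 / u3 a b D) \<bullet> (l2 - l1, l3 - l1)"
      using part1[OF assms(12), of "fst y" "snd y"] by simp
  qed
  have u2: "u2 a b D > 0" and u3: "u3 a b D > 0" using assms(12) unfolding contour_defined_def by auto
  have gpos: "min b12 b23 * u3 a b D / (u2 a b D + u3 a b D) > 0"
    using u2 u3 assms(4,5) by simp
  show "\<exists>C \<gamma>. C > 0 \<and> \<gamma> > 0 \<and>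
           (\<forall>y::int \<times> int. fst y > 0 \<and> snd y > 0 \<and> phiL a b D (rpt y) > C \<longrightarrow>
             (\<Sum>\<^sub>\<infinity>z\<in>UNIV - {y}. r_roll l2 b12 b23 y z * (phiL a b D (rpt z) - phiL a b D (rpt y)))
             \<le> - \<gamma> * phiL a b D (rpt y))"
  proof (intro exI conjI allI impI)
    show "(1::real) > 0" by simp
    show "min b12 b23 * u3 a b D / (u2 a b D + u3 a b D) > 0" by (rule gpos)
    fix y :: "int \<times> int" assume "fst y > 0 \<and> snd y > 0 \<and> phiL a b D (rpt y) > 1"
    then show "(\<Sum>\<^sub>\<infinity>z\<in>UNIV - {y}. r_roll l2 b12 b23 y z * (phiL a b D (rpt z) - phiL a b D (rpt y)))
             \<le> - (min b12 b23 * u3 a b D / (u2 a b D + u3 a b D)) * phiL a b D (rpt y)"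
      using part2[OF assms(12), of "fst y" "snd y" l2 b12 b23] assms(2,4,5) by simp
  qed
qed

end
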